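(* Let $P$ be a regular polygon surface all of whose faces have degree in $\{5,7,8,9,10\}$, and let $f$ be a face of $P$ of degree $n\geq 7$. If $f$ has positive facial curvature, then every vertex incident to $f$ has the form $(5^2,n)$, i.e. has degree three and is incident to exactly two faces of degree five and one face (namely $f$) of degree $n$. Moreover, if $f$ is incident to a vertex with negative vertex curvature, then $f$ has negative facial curvature.
   Context: A regular polygon surface (RPS) is a triple $(\Sigma,\Gamma,\psi)$ where $\Gamma$ is a finite graph embedded in a closed surface $\Sigma$ so that every face (component of $\Sigma\setminus\Gamma$) has closure a closed $2$-cell, the closures of two faces meet in the empty set, a vertex, or an edge, and $\psi:\Sigma\to\mathbb{R}^3$ is continuous and maps each face of degree $k$ (number of incident edges) onto a regular Euclidean $k$-gon with unit edge lengths; the images of two adjacent faces meet in exactly one vertex or exactly one edge with its endpoints. The vertex curvature $k_v$ of a vertex $v$ is $2\pi$ minus the sum, over faces containing $v$, of the interior angle at $v$ of the regular polygon that is the image of that face. The facial curvature of a face $f$ is $k_f=\sum_{v\in f} k_v/d_v$, summing over vertices $v$ incident to $f$, where $d_v$ is the degree of $v$. *)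

theory Defs
  imports "HOL-Analysis.Analysis"
begin

text \<open>Vertices have type 'v; a face is a list of distinct vertices in cyclic
  boundary order; F is the finite set of faces; pos gives the image under psi
  of each vertex in R^3.\<close>

definition face_edges :: "'v list \<Rightarrow> 'v set set" where
  "face_edges f = {{f ! i, f ! (Suc i mod length f)} | i. i < length f}"

definition graph_edges :: "'v list set \<Rightarrow> 'v set set" where
  "graph_edges F = (\<Union>f\<in>F. face_edges f)"

definition faces_at :: "'v list set \<Rightarrow> 'v \<Rightarrow> 'v list set" where
  "faces_at F v = {g \<in> F. v \<in> set g}"

definition adj_at :: "'v list set \<Rightarrow> 'v \<Rightarrow> 'v list \<Rightarrow> 'v list \<Rightarrow> bool" where
  "adj_at F v f g \<longleftrightarrow> f \<in> F \<and> g \<in> F \<and> f \<noteq> g \<and>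
     (\<exists>e. v \<in> e \<and> e \<in> face_edges f \<and> e \<in> face_edges g)"

definition adj :: "'v list set \<Rightarrow> 'v list \<Rightarrow> 'v list \<Rightarrow> bool" where
  "adj F f g \<longleftrightarrow> f \<in> F \<and> g \<in> F \<and> f \<noteq> g \<and> face_edges f \<inter> face_edges g \<noteq> {}"

definition regular_unit_polygon :: "nat \<Rightarrow> (nat \<Rightarrow> real^3) \<Rightarrow> bool" where
  "regular_unit_polygon k p \<longleftrightarrow> k \<ge> 3 \<and>
     (\<exists>c u w r. r > 0 \<and> norm u = 1 \<and> norm w = 1 \<and> inner u w = 0 \<and>
        (\<forall>i<k. p i = c + r *\<^sub>R (cos (2 * pi * real i / real k) *\<^sub>R u
                                + sin (2 * pi * real i / real k) *\<^sub>R w)) \<and>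
        dist (p 0) (p 1) = 1)"

definition face_image :: "('v \<Rightarrow> real^3) \<Rightarrow> 'v list \<Rightarrow> (real^3) set" where
  "face_image pos f = convex hull (pos ` set f)"

definition rps :: "'v list set \<Rightarrow> ('v \<Rightarrow> real^3) \<Rightarrow> bool" where
  "rps F pos \<longleftrightarrow>
     finite F \<and> F \<noteq> {} \<and>
     \<comment> \<open>faces are closed 2-cells bounded by cycles of length at least 3\<close>
     (\<forall>f\<in>F. distinct f \<and> length f \<ge> 3) \<and>
     \<comment> \<open>closed surface: every edge lies on exactly two faces\<close>
     (\<forall>e\<in>graph_edges F. card {g\<in>F. e \<in> face_edges g} = 2) \<and>
     \<comment> \<open>closed surface: the faces around each vertex form a single cycle (disc link)\<close>
     (\<forall>v. \<forall>f\<in>faces_at F v. \<forall>g\<in>faces_at F v. (adj_at F v)\<^sup>*\<^sup>* f g) \<and>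
     \<comment> \<open>the surface is connected\<close>
     (\<forall>f\<in>F. \<forall>g\<in>F. (adj F)\<^sup>*\<^sup>* f g) \<and>
     \<comment> \<open>closures of two faces meet in the empty set, a vertex, or an edge\<close>
     (\<forall>f\<in>F. \<forall>g\<in>F. f \<noteq> g \<longrightarrow>
        set f \<inter> set g = {} \<or> card (set f \<inter> set g) = 1 \<or>
        (set f \<inter> set g \<in> face_edges f \<inter> face_edges g)) \<and>
     \<comment> \<open>each face is mapped onto a regular unit polygon, vertices to corners in order\<close>
     (\<forall>f\<in>F. regular_unit_polygon (length f) (\<lambda>i. pos (f ! i))) \<and>
     \<comment> \<open>images of two adjacent faces meet in exactly one vertex or exactly one edge\<close>
     (\<forall>f\<in>F. \<forall>g\<in>F. f \<noteq> g \<longrightarrow> set f \<inter> set g \<noteq> {} \<longrightarrow>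
        (\<exists>v\<in>set f \<inter> set g. face_image pos f \<inter> face_image pos g = {pos v}) \<or>
        (\<exists>v w. {v, w} \<in> face_edges f \<inter> face_edges g \<and>
           face_image pos f \<inter> face_image pos g = closed_segment (pos v) (pos w)))"

definition vdeg :: "'v list set \<Rightarrow> 'v \<Rightarrow> nat" where
  "vdeg F v = card {e \<in> graph_edges F. v \<in> e}"

definition interior_angle :: "nat \<Rightarrow> real" where
  "interior_angle k = pi - 2 * pi / real k"

definition vertex_curvature :: "'v list set \<Rightarrow> 'v \<Rightarrow> real" where
  "vertex_curvature F v = 2 * pi - (\<Sum>g\<in>faces_at F v. interior_angle (length g))"

definition facial_curvature :: "'v list set \<Rightarrow> 'v list \<Rightarrow> real" where
  "facial_curvature F f = (\<Sum>v\<in>set f. vertex_curvature F v / real (vdeg F v))"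

definition vertex_type_55n :: "'v list set \<Rightarrow> 'v \<Rightarrow> nat \<Rightarrow> bool" where
  "vertex_type_55n F v n \<longleftrightarrow> vdeg F v = 3 \<and> card (faces_at F v) = 3 \<and>
     card {g \<in> faces_at F v. length g = 5} = 2 \<and>
     card {g \<in> faces_at F v. length g = n} = 1"

end

theory Submission
  imports Defs
begin

lemma cos_period_nat: "cos (x + 2 * pi * real (m::nat)) = cos x"
proof (induction m)
  case (Suc m)
  have "x + 2 * pi * real (Suc m) = (x + 2 * pi * real m) + 2 * pi" by (simp add: algebra_simps)
  then show ?case using Suc by (metis cos_periodic sin_periodic)
qed simp

lemma sin_period_nat: "sin (x + 2 * pi * real (m::nat)) = sin x"
proof (induction m)
  case (Suc m)
  have "x + 2 * pi * real (Suc m) = (x + 2 * pi * real m) + 2 * pi" by (simp add: algebra_simps)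
  then show ?case using Suc by (metis cos_periodic sin_periodic)
qed simp

lemma three_step_cos:
  "cos ((t::real) + 3*h) - (1 + 2*cos h) * cos (t + 2*h) + (1 + 2*cos h) * cos (t + h) - cos t = 0"
proof -
  have e1: "(t+3*h + (t+h))/2 = t+2*h" "(t+3*h - (t+h))/2 = h" "(t+2*h + t)/2 = t+h" "(t+2*h - t)/2 = h"
    by (simp_all add: field_simps)
  have a: "cos (t + 3*h) + cos (t + h) = 2 * cos (t + 2*h) * cos h"
    using cos_plus_cos[of "t+3*h" "t+h"] by (simp only: e1)
  have b: "cos (t + 2*h) + cos t = 2 * cos (t + h) * cos h"
    using cos_plus_cos[of "t+2*h" "t"] by (simp only: e1)
  show ?thesis using a b by (simp add: algebra_simps)
qed

lemma three_step_sin: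
  "sin ((t::real) + 3*h) - (1 + 2*cos h) * sin (t + 2*h) + (1 + 2*cos h) * sin (t + h) - sin t = 0"
proof -
  have e1: "(t+3*h + (t+h))/2 = t+2*h" "(t+3*h - (t+h))/2 = h" "(t+2*h + t)/2 = t+h" "(t+2*h - t)/2 = h"
    by (simp_all add: field_simps)
  have a: "sin (t + 3*h) + sin (t + h) = 2 * sin (t + 2*h) * cos h"
    using sin_plus_sin[of "t+3*h" "t+h"] by (simp only: e1)
  have b: "sin (t + 2*h) + sin t = 2 * sin (t + h) * cos h"
    using sin_plus_sin[of "t+2*h" "t"] by (simp only: e1)
  show ?thesis using a b by (simp add: algebra_simps)
qed

lemma reg_props:
  assumes "regular_unit_polygon k p"
  defines "P \<equiv> (\<lambda>j. p (j mod k))"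
  shows "norm (P (j+1) - P j) = 1"
    and "inner (P j - P (j+1)) (P (j+2) - P (j+1)) = - cos (2*pi/k)"
    and "P (j+3) - (1 + 2*cos (2*pi/k)) *\<^sub>R P (j+2) + (1 + 2*cos (2*pi/k)) *\<^sub>R P (j+1) - P j = 0"
proof -
  from assms(1) obtain c u w r where k3: "k \<ge> 3" and r: "r > 0" and u: "norm u = 1" and w: "norm w = 1"
    and uw: "inner u w = 0"
    and pd: "\<forall>i<k. p i = c + r *\<^sub>R (cos (2 * pi * real i / real k) *\<^sub>R u
                                + sin (2 * pi * real i / real k) *\<^sub>R w)"
    and d01: "dist (p 0) (p 1) = 1"
    unfolding regular_unit_polygon_def by blast
  define h where "h = 2*pi/k"
  define e where "e = (\<lambda>t. cos t *\<^sub>R u + sin t *\<^sub>R w)"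
  define Q where "Q = (\<lambda>t. c + r *\<^sub>R e t)"
  have uu: "inner u u = 1" using u by (simp add: dot_square_norm)
  have ww: "inner w w = 1" using w by (simp add: dot_square_norm)
  have ee: "inner (e s) (e t) = cos (s - t)" for s t
    unfolding e_def using uu ww uw
    by (simp add: inner_add_left inner_add_right inner_commute cos_diff)
  have PQ: "P j = Q (h * real j)" for j
  proof -
    have kpos: "k > 0" using k3 by simp
    have "real j = real (j mod k) + real k * real (j div k)"
      by (metis of_nat_add of_nat_mult mod_mult_div_eq add.commute mult.commute)
    then have hj: "h * real j = 2 * pi * real (j mod k) / real k + 2 * pi * real (j div k)"
      unfolding h_def using kpos by (simp add: field_simps)
    have "P j = p (j mod k)" by (simp add: P_def)
    also have "\<dots> = Q (2 * pi * real (j mod k) / real k)"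
      using pd kpos by (simp add: Q_def e_def)
    also have "\<dots> = Q (h * real j)" unfolding hj Q_def e_def
      by (simp add: cos_period_nat sin_period_nat)
    finally show ?thesis .
  qed
  have QQ: "inner (Q s - Q t) (Q s' - Q t') = r^2 * (cos (s - s') - cos (s - t') - cos (t - s') + cos (t - t'))"
    for s t s' t'
  proof -
    have q: "Q s - Q t = r *\<^sub>R (e s - e t)" "Q s' - Q t' = r *\<^sub>R (e s' - e t')" by (simp_all add: Q_def algebra_simps)
    show ?thesis unfolding q by (simp add: inner_diff_left inner_diff_right ee power2_eq_square algebra_simps)
  qed
  have n01: "r^2 * (2 - 2 * cos h) = 1"
  proof -
    have "p 0 = P 0" "p 1 = P 1" using k3 by (simp_all add: P_def)
    then have "1 = (norm (P 1 - P 0))^2" using d01 by (simp add: dist_norm norm_minus_commute)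
    also have "\<dots> = inner (P 1 - P 0) (P 1 - P 0)" by (simp add: dot_square_norm)
    also have "\<dots> = r^2 * (2 - 2 * cos h)" unfolding PQ QQ by simp
    finally show ?thesis by simp
  qed
  have "(norm (P (j+1) - P j))^2 = inner (P (j+1) - P j) (P (j+1) - P j)" by (simp add: dot_square_norm)
  also have "\<dots> = r^2 * (2 - 2 * cos h)" unfolding PQ QQ by (simp add: algebra_simps)
  finally show "norm (P (j+1) - P j) = 1" using n01
    by (metis norm_ge_zero power2_eq_1_iff abs_of_nonneg abs_power2 real_sqrt_abs real_sqrt_one)
  have "inner (P j - P (j+1)) (P (j+2) - P (j+1)) = r^2 * (cos (2*h) - 2 * cos h + 1)"
    unfolding PQ QQ by (simp add: algebra_simps)
  also have "\<dots> = - cos h * (r^2 * (2 - 2 * cos h))" by (simp only: cos_double_cos) (simp add: algebra_simps power2_eq_square)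
  finally show "inner (P j - P (j+1)) (P (j+2) - P (j+1)) = - cos (2*pi/k)" using n01 h_def by simp
  let ?C = "1 + 2 * cos h"
  define t where "t = h * real j"
  have hs: "h * real (j+3) = t + 3*h" "h * real (j+2) = t + 2*h" "h * real (j+1) = t + h"
    by (simp_all add: t_def algebra_simps)
  have "P (j+3) - ?C *\<^sub>R P (j+2) + ?C *\<^sub>R P (j+1) - P j
      = r *\<^sub>R ((cos (t + 3*h) - ?C * cos (t + 2*h) + ?C * cos (t + h) - cos t) *\<^sub>R u
              + (sin (t + 3*h) - ?C * sin (t + 2*h) + ?C * sin (t + h) - sin t) *\<^sub>R w)"
    unfolding PQ hs t_def[symmetric] by (simp add: Q_def e_def algebra_simps)
  also have "\<dots> = 0" using three_step_cos three_step_sin by simp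
  finally show "P (j+3) - (1 + 2*cos (2*pi/k)) *\<^sub>R P (j+2) + (1 + 2*cos (2*pi/k)) *\<^sub>R P (j+1) - P j = 0"
    by (simp add: h_def)
qed


lemma gram3:
  fixes x y z :: "'a::real_inner"
  assumes "norm x = 1" "norm y = 1" "norm z = 1" "\<bar>inner x y\<bar> < 1"
  shows "1 - (inner x y)^2 - (inner y z)^2 - (inner x z)^2 + 2 * inner x y * inner y z * inner x z \<ge> 0"
proof -
  define p where "p = inner x y"
  define q where "q = inner y z"
  define s where "s = inner x z"
  have xx: "inner x x = 1" using assms(1) by (simp add: dot_square_norm)
  have yy: "inner y y = 1" using assms(2) by (simp add: dot_square_norm)
  have zz: "inner z z = 1" using assms(3) by (simp add: dot_square_norm)
  have H: "0 \<le> t^2 + l^2 + m^2 - 2 * l * t * s - 2 * m * t * q + 2 * l * m * p" for l m t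
  proof -
    have "0 \<le> inner (t *\<^sub>R z - l *\<^sub>R x - m *\<^sub>R y) (t *\<^sub>R z - l *\<^sub>R x - m *\<^sub>R y)" by simp
    also have "\<dots> = t^2 + l^2 + m^2 - 2 * l * t * s - 2 * m * t * q + 2 * l * m * p"
      using xx yy zz unfolding p_def q_def s_def
      by (simp add: inner_diff_left inner_diff_right inner_commute power2_eq_square algebra_simps)
    finally show ?thesis .
  qed
  define D where "D = 1 - p^2"
  have Dpos: "D > 0" using assms(4) unfolding D_def p_def by (simp add: abs_square_less_1)
  have "D^2 + (s - p * q)^2 + (q - p * s)^2 - 2 * (s - p * q) * D * s - 2 * (q - p * s) * D * q
        + 2 * (s - p * q) * (q - p * s) * p = D * (1 - p^2 - q^2 - s^2 + 2 * p * q * s)"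
    unfolding D_def by (simp add: power2_eq_square algebra_simps)
  then have "0 \<le> D * (1 - p^2 - q^2 - s^2 + 2 * p * q * s)" using H[where l="s - p * q" and m="q - p * s" and t=D] by simp
  then have "0 \<le> 1 - p^2 - q^2 - s^2 + 2 * p * q * s" using Dpos by (simp add: zero_le_mult_iff)
  then show ?thesis unfolding p_def q_def s_def by (simp add: algebra_simps)
qed


lemma spherical_sum:
  fixes a b g :: real
  assumes "0 \<le> a" "a \<le> pi" "0 \<le> b" "b \<le> pi" "0 \<le> g" "g \<le> pi" "a + b \<ge> pi"
    and G: "1 - (cos a)^2 - (cos b)^2 - (cos g)^2 + 2 * cos a * cos b * cos g \<ge> 0"
  shows "a + b + g \<le> 2 * pi"
proof -
  have sa: "sin a \<ge> 0" "sin b \<ge> 0" using assms by (simp_all add: sin_ge_zero)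
  have s2: "(sin a * sin b)^2 = (1 - (cos a)^2) * (1 - (cos b)^2)"
    by (simp only: power_mult_distrib sin_squared_eq)
  have "1 - (cos a)^2 - (cos b)^2 - (cos g)^2 + 2 * cos a * cos b * cos g
        = (sin a * sin b)^2 - (cos g - cos a * cos b)^2"
    unfolding s2 by (simp add: power2_eq_square algebra_simps)
  with G have "(cos g - cos a * cos b)^2 \<le> (sin a * sin b)^2" by simp
  then have "\<bar>cos g - cos a * cos b\<bar> \<le> \<bar>sin a * sin b\<bar>"
    using abs_le_square_iff by blast
  then have "\<bar>cos g - cos a * cos b\<bar> \<le> sin a * sin b"
    using sa by simp
  then have "cos g \<ge> cos a * cos b - sin a * sin b" by linarith
  then have c1: "cos g \<ge> cos (a + b)" by (simp add: cos_add)
  have "cos (a + b) = cos (2*pi - (a+b))"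
    by (simp only: cos_2pi_minus)
  with c1 have c2: "cos (2*pi - (a+b)) \<le> cos g" by linarith
  have h1: "0 \<le> 2*pi - (a+b)" "2*pi - (a+b) \<le> pi" using assms by linarith+
  have "cos (2*pi - (a+b)) \<le> cos g \<longleftrightarrow> g \<le> 2*pi - (a+b)"
    by (rule cos_mono_le_eq) (use h1 assms(5,6) in auto)
  with c2 have "g \<le> 2*pi - (a+b)" by blast
  then show ?thesis by simp
qed


lemma deg4_ineq:
  fixes x y a c :: "'a::real_inner"
  assumes "norm x = 1" "norm y = 1" "norm a = 1" "norm c = 1"
    and "inner x y = - cn" "inner x a = - c5" "inner y a = - c5" "inner x c = - c5" "inner y c = - c5"
    and "cn < 1"
  shows "inner a c \<ge> 4 * c5^2 / (1 - cn) - 1"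
proof -
  have xx: "inner x x = 1" using assms(1) by (simp add: dot_square_norm)
  have yy: "inner y y = 1" using assms(2) by (simp add: dot_square_norm)
  have aa: "inner a a = 1" using assms(3) by (simp add: dot_square_norm)
  have cc: "inner c c = 1" using assms(4) by (simp add: dot_square_norm)
  define l where "l = - c5 / (1 - cn)"
  have D: "1 - cn > 0" using assms by simp
  define v where "v = a + c - (2*l) *\<^sub>R (x + y)"
  have "0 \<le> inner v v" by simp
  also have "inner v v = 2 + 2 * inner a c + 16 * l * c5 + 8 * l^2 * (1 - cn)"
    unfolding v_def using xx yy aa cc assms(5-9)
    by (simp add: inner_diff_left inner_diff_right inner_add_left inner_add_right inner_commute power2_eq_square algebra_simps)
  finally have 1: "0 \<le> 2 + 2 * inner a c + 16 * l * c5 + 8 * l^2 * (1 - cn)" .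
  have ld: "l * (1 - cn) = - c5" using D by (simp add: l_def)
  have "8 * l^2 * (1 - cn) = 8 * l * (l * (1 - cn))" by (simp add: power2_eq_square)
  also have "\<dots> = - 8 * l * c5" using ld by simp
  finally have "16 * l * c5 + 8 * l^2 * (1 - cn) = 8 * l * c5" by linarith
  then have 2: "16 * l * c5 + 8 * l^2 * (1 - cn) = - 8 * c5^2 / (1 - cn)"
    by (simp add: l_def power2_eq_square)
  have "0 \<le> 2 + 2 * inner a c - 8 * c5^2 / (1 - cn)" using 1 2 by linarith
  then show ?thesis by (simp add: field_simps)
qed


definition V :: "'v list \<Rightarrow> nat \<Rightarrow> 'v" where "V g j = g ! (j mod length g)"
definition edges_at :: "'v list \<Rightarrow> 'v \<Rightarrow> 'v set set" where
  "edges_at g v = {e \<in> face_edges g. v \<in> e}"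
definition Ev :: "'v list set \<Rightarrow> 'v \<Rightarrow> 'v set set" where
  "Ev F v = {e \<in> graph_edges F. v \<in> e}"
definition efaces :: "'v list set \<Rightarrow> 'v set \<Rightarrow> 'v list set" where
  "efaces F e = {g \<in> F. e \<in> face_edges g}"

lemma rps_fin: "rps F pos \<Longrightarrow> finite F"
  by (simp add: rps_def)
lemma rps_face: "rps F pos \<Longrightarrow> f \<in> F \<Longrightarrow> distinct f \<and> length f \<ge> 3"
  by (simp add: rps_def)
lemma rps_edge2: "rps F pos \<Longrightarrow> e \<in> graph_edges F \<Longrightarrow> card (efaces F e) = 2"
  by (simp add: rps_def efaces_def)
lemma rps_meet: "rps F pos \<Longrightarrow> f \<in> F \<Longrightarrow> g \<in> F \<Longrightarrow> f \<noteq> g \<Longrightarrow>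
        set f \<inter> set g = {} \<or> card (set f \<inter> set g) = 1 \<or>
        (set f \<inter> set g \<in> face_edges f \<inter> face_edges g)"
  unfolding rps_def by blast
lemma rps_reg: "rps F pos \<Longrightarrow> f \<in> F \<Longrightarrow> regular_unit_polygon (length f) (\<lambda>i. pos (f ! i))"
  by (simp add: rps_def)

lemma mod_neq:
  fixes j d k :: nat
  assumes "0 < d" "d < k"
  shows "j mod k \<noteq> (j + d) mod k"
proof
  assume "j mod k = (j + d) mod k"
  then have "k dvd (j + d) - j" using mod_eq_dvd_iff_nat[of j "j+d" k] by simp
  then have "k dvd d" by simp
  with assms show False using nat_dvd_not_less by blast
qed

context
  fixes g :: "'v list"
  assumes gd: "distinct g" and g3: "length g \<ge> 3"
begin

lemma kpos: "length g > 0" using g3 by linarith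

lemma V_eq_iff: "V g a = V g b \<longleftrightarrow> a mod length g = b mod length g"
  unfolding V_def using gd kpos by (simp add: nth_eq_iff_index_eq)

lemma V_add_len: "V g (j + length g) = V g j"
  unfolding V_def by simp

lemma V_in: "V g j \<in> set g"
  unfolding V_def using kpos by simp

lemma face_edges_V: "face_edges g = {{V g i, V g (i+1)} | i. True}"
proof -
  have A1: "{V g i, V g (i+1)} = {g ! (i mod length g), g ! (Suc (i mod length g) mod length g)}" for i
    unfolding V_def by (simp add: mod_Suc_eq)
  have A2: "i < length g \<Longrightarrow> {g ! i, g ! (Suc i mod length g)} = {V g i, V g (i+1)}" for i
    unfolding V_def by simp
  show ?thesis unfolding face_edges_def
  proof (intro set_eqI iffI)
    fix e assume "e \<in> {{g ! i, g ! (Suc i mod length g)} |i. i < length g}"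
    then obtain i where "i < length g" "e = {g ! i, g ! (Suc i mod length g)}" by blast
    with A2 show "e \<in> {{V g i, V g (i+1)} | i. True}" by blast
  next
    fix e assume "e \<in> {{V g i, V g (i+1)} | i. True}"
    then obtain i where "e = {V g i, V g (i+1)}" by blast
    with A1 have "e = {g ! (i mod length g), g ! (Suc (i mod length g) mod length g)}" by simp
    moreover have "i mod length g < length g" using kpos by simp
    ultimately show "e \<in> {{g ! i, g ! (Suc i mod length g)} |i. i < length g}" by blast
  qed
qed

lemma set_V: "v \<in> set g \<Longrightarrow> \<exists>j. v = V g (j+1)"
proof -
  assume "v \<in> set g"
  then obtain i where i: "i < length g" "v = g ! i" by (auto simp: in_set_conv_nth)
  have "i + length g - 1 + 1 = i + length g" using g3 by simp
  then have "(i + length g - 1 + 1) mod length g = i" using i by simp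
  then show ?thesis using i unfolding V_def by metis
qed

lemma V_distinct3: "V g j \<noteq> V g (j+1)" "V g (j+1) \<noteq> V g (j+2)" "V g j \<noteq> V g (j+2)"
proof -
  show "V g j \<noteq> V g (j+1)" unfolding V_eq_iff using mod_neq[of 1 "length g" j] g3 by simp
  show "V g (j+1) \<noteq> V g (j+2)" unfolding V_eq_iff using mod_neq[of 1 "length g" "j+1"] g3 by simp
  show "V g j \<noteq> V g (j+2)" unfolding V_eq_iff using mod_neq[of 2 "length g" j] g3 by simp
qed

lemma edges_at_V:
  "edges_at g (V g (j+1)) = {{V g j, V g (j+1)}, {V g (j+1), V g (j+2)}}"
proof -
  let ?k = "length g"
  have k: "?k \<ge> 3" by (rule g3)
  have "{V g i, V g (i+1)} \<in> {{V g j, V g (j+1)}, {V g (j+1), V g (j+2)}}"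
    if "V g (j+1) \<in> {V g i, V g (i+1)}" for i
  proof -
    from that have "V g (j+1) = V g i \<or> V g (j+1) = V g (i+1)" by auto
    then show ?thesis
    proof
      assume "V g (j+1) = V g i"
      then have "(j+1) mod ?k = i mod ?k" by (simp add: V_eq_iff)
      then have "(j+2) mod ?k = (i+1) mod ?k" by (metis add_2_eq_Suc' mod_Suc_eq Suc_eq_plus1)
      then have "V g (i+1) = V g (j+2)" by (simp add: V_eq_iff)
      then show ?thesis using \<open>V g (j+1) = V g i\<close> by auto
    next
      assume "V g (j+1) = V g (i+1)"
      then have "(j+1) mod ?k = (i+1) mod ?k" by (simp add: V_eq_iff)
      then have "j mod ?k = i mod ?k"
      proof -
        assume h: "(j+1) mod ?k = (i+1) mod ?k"
        have e: "x + 1 + (?k - 1) = x + ?k" for x using k by simp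
        have "j mod ?k = (j + 1 + (?k - 1)) mod ?k" by (simp only: e) simp
        also have "\<dots> = ((j + 1) mod ?k + (?k - 1)) mod ?k" by (simp add: mod_add_left_eq)
        also have "\<dots> = ((i + 1) mod ?k + (?k - 1)) mod ?k" by (simp only: h)
        also have "\<dots> = (i + 1 + (?k - 1)) mod ?k" by (simp add: mod_add_left_eq)
        also have "\<dots> = i mod ?k" by (simp only: e) simp
        finally show ?thesis .
      qed
      then have "V g i = V g j" by (simp add: V_eq_iff)
      then show ?thesis using \<open>V g (j+1) = V g (i+1)\<close> by auto
    qed
  qed
  note X = this
  show ?thesis unfolding edges_at_def face_edges_V
  proof (intro set_eqI iffI)
    fix e assume "e \<in> {e \<in> {{V g i, V g (i + 1)} |i. True}. V g (j + 1) \<in> e}"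
    then obtain i where "e = {V g i, V g (i + 1)}" "V g (j + 1) \<in> e" by blast
    with X show "e \<in> {{V g j, V g (j + 1)}, {V g (j + 1), V g (j + 2)}}" by blast
  next
    fix e assume "e \<in> {{V g j, V g (j + 1)}, {V g (j + 1), V g (j + 2)}}"
    moreover have "{V g (j + 1), V g (j + 2)} = {V g (j+1), V g (j + 1 + 1)}" by simp
    ultimately show "e \<in> {e \<in> {{V g i, V g (i + 1)} |i. True}. V g (j + 1) \<in> e}" by blast
  qed
qed

end


lemma card_filter_sum: "finite A \<Longrightarrow> card {x\<in>A. P x} = (\<Sum>x\<in>A. if P x then 1 else (0::nat))"
  by (simp add: sum.If_cases Int_def)

context
  fixes F :: "'v list set" and pos :: "'v \<Rightarrow> real^3"
  assumes R: "rps F pos"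
begin

lemma fd: "g \<in> F \<Longrightarrow> distinct g" using rps_face[OF R] by blast
lemma f3: "g \<in> F \<Longrightarrow> length g \<ge> 3" using rps_face[OF R] by blast

lemma face_edge_sub:
  assumes "g \<in> F" "e \<in> face_edges g"
  shows "e \<subseteq> set g" "\<exists>a b. e = {a,b} \<and> a \<noteq> b"
proof -
  from assms obtain i where e: "e = {V g i, V g (i+1)}"
    using face_edges_V[OF fd[OF assms(1)] f3[OF assms(1)]] by blast
  show "e \<subseteq> set g" using e V_in[OF fd[OF assms(1)] f3[OF assms(1)]] by auto
  show "\<exists>a b. e = {a,b} \<and> a \<noteq> b" using e V_distinct3(1)[OF fd[OF assms(1)] f3[OF assms(1)]] by blast
qed

lemma face_edges_graph: "g \<in> F \<Longrightarrow> face_edges g \<subseteq> graph_edges F"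
  unfolding graph_edges_def by blast

lemma edges_at_form:
  assumes "g \<in> F" "v \<in> set g"
  shows "\<exists>a b. a \<noteq> b \<and> a \<noteq> v \<and> b \<noteq> v \<and> edges_at g v = {{v,a},{v,b}}"
proof -
  note gd = fd[OF assms(1)] f3[OF assms(1)]
  obtain j where j: "v = V g (j+1)" using set_V[OF gd assms(2)] by blast
  have "edges_at g v = {{v, V g j}, {v, V g (j+2)}}" using edges_at_V[OF gd, of j] j
    by (simp add: insert_commute)
  moreover have "V g j \<noteq> V g (j+2)" "V g j \<noteq> v" "V g (j+2) \<noteq> v"
    using V_distinct3[OF gd, of j] j by auto
  ultimately show ?thesis by blast
qed

lemma edge_other_end:
  assumes "g \<in> F" "{v,w} \<in> face_edges g"
  shows "\<exists>u. u \<noteq> w \<and> u \<noteq> v \<and> v \<noteq> w \<and> edges_at g v = {{v,w},{v,u}}"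
proof -
  have "v \<in> set g" using face_edge_sub(1)[OF assms] by auto
  then obtain a b where ab: "a \<noteq> b" "a \<noteq> v" "b \<noteq> v" "edges_at g v = {{v,a},{v,b}}"
    using edges_at_form[OF assms(1)] by blast
  have "{v,w} \<in> edges_at g v" using assms(2) by (simp add: edges_at_def)
  then have "{v,w} = {v,a} \<or> {v,w} = {v,b}" using ab by auto
  then have "w = a \<or> w = b" by (metis doubleton_eq_iff)
  then show ?thesis using ab by (auto simp: insert_commute)
qed

lemma other_face:
  assumes "g \<in> F" "e \<in> face_edges g"
  shows "\<exists>h\<in>F. h \<noteq> g \<and> e \<in> face_edges h \<and> efaces F e = {g,h}"
proof -
  have "e \<in> graph_edges F" using assms face_edges_graph by blast
  then have "card (efaces F e) = 2" by (rule rps_edge2[OF R])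
  then obtain x y where xy: "efaces F e = {x,y}" "x \<noteq> y" by (meson card_2_iff)
  have "g \<in> efaces F e" using assms by (simp add: efaces_def)
  then have "g = x \<or> g = y" using xy by blast
  then obtain h where h: "h \<noteq> g" "efaces F e = {g,h}" using xy by (metis insert_commute)
  then have "h \<in> efaces F e" by simp
  then have "h \<in> F" "e \<in> face_edges h" by (simp_all add: efaces_def)
  then show ?thesis using h by blast
qed

lemma finite_efaces: "finite (efaces F e)"
  using rps_fin[OF R] by (simp add: efaces_def)

lemma no_three:
  assumes "a \<in> F" "b \<in> F" "c \<in> F" "a \<noteq> b" "a \<noteq> c" "b \<noteq> c"
    "e \<in> face_edges a" "e \<in> face_edges b" "e \<in> face_edges c"
  shows False
proof -
  have "e \<in> graph_edges F" using assms face_edges_graph by blast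
  then have "card (efaces F e) = 2" by (rule rps_edge2[OF R])
  moreover have "{a,b,c} \<subseteq> efaces F e" using assms by (simp add: efaces_def)
  then have "card {a,b,c} \<le> card (efaces F e)" using finite_efaces by (rule card_mono[rotated])
  ultimately show False using assms(4-6) by simp
qed

lemma meet_le2:
  assumes "f \<in> F" "g \<in> F" "f \<noteq> g"
  shows "card (set f \<inter> set g) \<le> 2"
proof -
  have "set f \<inter> set g = {} \<or> card (set f \<inter> set g) = 1 \<or> set f \<inter> set g \<in> face_edges f \<inter> face_edges g"
    using rps_meet[OF R assms] .
  then show ?thesis
  proof (elim disjE)
    assume "set f \<inter> set g \<in> face_edges f \<inter> face_edges g"
    then obtain a b where "set f \<inter> set g = {a,b}" using face_edge_sub(2)[OF assms(1)] by blast
    then show ?thesis by (simp add: card_insert_if)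
  qed auto
qed

lemma finite_face_edges: "finite (face_edges g)"
proof -
  have "face_edges g = (\<lambda>i. {g ! i, g ! (Suc i mod length g)}) ` {i. i < length g}"
    unfolding face_edges_def by blast
  then show ?thesis by simp
qed

lemma finite_S: "finite (faces_at F v)"
  using rps_fin[OF R] by (simp add: faces_at_def)

lemma finite_E: "finite (Ev F v)"
proof -
  have "finite (graph_edges F)" unfolding graph_edges_def
    using rps_fin[OF R] finite_face_edges by blast
  then show ?thesis by (simp add: Ev_def)
qed

lemma deg_eq: "vdeg F v = card (faces_at F v)"
proof -
  let ?S = "faces_at F v" and ?E = "Ev F v"
  have cS: "card (edges_at g v) = 2" if "g \<in> ?S" for g
  proof -
    from that have "g \<in> F" "v \<in> set g" by (auto simp: faces_at_def)
    then obtain a b where "a \<noteq> b" "edges_at g v = {{v,a},{v,b}}" using edges_at_form by blast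
    then show ?thesis by (simp add: doubleton_eq_iff)
  qed
  have cE: "card (efaces F e) = 2" if "e \<in> ?E" for e
    using that rps_edge2[OF R] by (simp add: Ev_def)
  have eq1: "edges_at g v = {e \<in> ?E. e \<in> face_edges g}" if "g \<in> ?S" for g
    using that face_edges_graph by (auto simp: faces_at_def edges_at_def Ev_def)
  have eq2: "efaces F e = {g \<in> ?S. e \<in> face_edges g}" if "e \<in> ?E" for e
    using that face_edge_sub(1) by (auto simp: faces_at_def efaces_def Ev_def)
  have "2 * card ?S = (\<Sum>g\<in>?S. card (edges_at g v))" using cS by simp
  also have "\<dots> = (\<Sum>g\<in>?S. \<Sum>e\<in>?E. if e \<in> face_edges g then 1 else 0)"
    using eq1 card_filter_sum[OF finite_E] by (intro sum.cong) auto
  also have "\<dots> = (\<Sum>e\<in>?E. \<Sum>g\<in>?S. if e \<in> face_edges g then 1 else 0)"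
    by (rule sum.swap)
  also have "\<dots> = (\<Sum>e\<in>?E. card (efaces F e))"
    using eq2 card_filter_sum[OF finite_S] by (intro sum.cong) auto
  also have "\<dots> = 2 * card ?E" using cE by simp
  finally show ?thesis by (simp add: vdeg_def Ev_def)
qed

lemma S_ge3:
  assumes "f \<in> F" "v \<in> set f"
  shows "card (faces_at F v) \<ge> 3"
proof (rule ccontr)
  assume "\<not> ?thesis"
  then have c: "card (faces_at F v) \<le> 2" by simp
  obtain a b where ab: "a \<noteq> b" "a \<noteq> v" "b \<noteq> v" "edges_at f v = {{v,a},{v,b}}"
    using edges_at_form[OF assms] by blast
  have ea: "{v,a} \<in> face_edges f" "{v,b} \<in> face_edges f" using ab(4) by (auto simp: edges_at_def)
  obtain h where h: "h \<in> F" "h \<noteq> f" "{v,a} \<in> face_edges h" using other_face[OF assms(1) ea(1)] by blast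
  obtain h' where h': "h' \<in> F" "h' \<noteq> f" "{v,b} \<in> face_edges h'" using other_face[OF assms(1) ea(2)] by blast
  have "h \<in> faces_at F v" "h' \<in> faces_at F v" "f \<in> faces_at F v"
    using face_edge_sub(1)[OF h(1) h(3)] face_edge_sub(1)[OF h'(1) h'(3)] h h' assms
    by (auto simp: faces_at_def)
  have "h = h'"
  proof (rule ccontr)
    assume "h \<noteq> h'"
    then have "{f,h,h'} \<subseteq> faces_at F v" "card {f,h,h'} = 3" using h h' \<open>h \<in> faces_at F v\<close> \<open>h' \<in> faces_at F v\<close> \<open>f \<in> faces_at F v\<close>
      by auto
    then have "card {f,h,h'} \<le> card (faces_at F v)" using card_mono[OF finite_S] by blast
    then show False using c \<open>card {f,h,h'} = 3\<close> by linarith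
  qed
  then have "{v,a,b} \<subseteq> set f \<inter> set h"
    using face_edge_sub(1)[OF h(1) h(3)] face_edge_sub(1)[OF h'(1) h'(3)] face_edge_sub(1)[OF assms(1) ea(1)]
      face_edge_sub(1)[OF assms(1) ea(2)] by auto
  then have "card {v,a,b} \<le> card (set f \<inter> set h)" by (intro card_mono) auto
  moreover have "card {v,a,b} = 3" using ab by auto
  ultimately show False using meet_le2[OF assms(1) h(1) h(2)[symmetric]] by simp
qed

end

context
  fixes F :: "'v list set" and pos :: "'v \<Rightarrow> real^3"
  assumes R: "rps F pos"
begin

lemma posV: "pos (V g j) = (\<lambda>j. (\<lambda>i. pos (g ! i)) (j mod length g)) j"
  by (simp add: V_def)

lemma pair_cases:
  assumes "{{x,v},{v,y}} = {{v,a},{v,b}}" "a \<noteq> v" "b \<noteq> v" "x \<noteq> v" "y \<noteq> v" "a \<noteq> b"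
  shows "(a = x \<and> b = y) \<or> (a = y \<and> b = x)"
proof -
  have "{v,a} \<in> {{x,v},{v,y}}" "{v,b} \<in> {{x,v},{v,y}}" using assms(1) by auto
  then have "(a = x \<or> a = y) \<and> (b = x \<or> b = y)" using assms(2-5) by (auto simp: doubleton_eq_iff)
  then show ?thesis using assms(6) by blast
qed

lemma edge_ne: "g \<in> F \<Longrightarrow> {v,a} \<in> face_edges g \<Longrightarrow> a \<noteq> v"
  using face_edge_sub(2)[OF R] by (metis doubleton_eq_iff insert_absorb2)

lemma angle_at:
  assumes g: "g \<in> F" and ea: "edges_at g v = {{v,a},{v,b}}" and ab: "a \<noteq> b"
  shows "inner (pos a - pos v) (pos b - pos v) = - cos (2*pi / length g)"
    "norm (pos a - pos v) = 1" "norm (pos b - pos v) = 1"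
proof -
  note gd = fd[OF R g] f3[OF R g]
  have fe: "{v,a} \<in> face_edges g" "{v,b} \<in> face_edges g" using ea by (auto simp: edges_at_def)
  have "v \<in> set g" using face_edge_sub(1)[OF R g fe(1)] by auto
  then obtain j where j: "v = V g (j+1)" using set_V[OF gd] by blast
  have ne: "a \<noteq> v" "b \<noteq> v" using edge_ne fe g by auto
  have ne2: "V g j \<noteq> v" "V g (j+2) \<noteq> v" using V_distinct3[OF gd, of j] j by auto
  have "{{V g j, v}, {v, V g (j+2)}} = {{v,a},{v,b}}" using edges_at_V[OF gd, of j] j ea by simp
  then have c: "(a = V g j \<and> b = V g (j+2)) \<or> (a = V g (j+2) \<and> b = V g j)"
    by (rule pair_cases[OF _ ne(1) ne(2) ne2(1) ne2(2) ab])
  define P where "P = (\<lambda>j. (\<lambda>i. pos (g ! i)) (j mod length g))"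
  have PV: "P i = pos (V g i)" for i by (simp add: P_def V_def)
  note rp = reg_props[OF rps_reg[OF R g]]
  have i1: "inner (pos (V g j) - pos v) (pos (V g (j+2)) - pos v) = - cos (2*pi / length g)"
    using rp(2)[of j] j by (simp add: V_def)
  have n1: "norm (pos (V g j) - pos v) = 1"
    using rp(1)[of j] j by (simp add: V_def norm_minus_commute)
  have n2: "norm (pos (V g (j+2)) - pos v) = 1"
    using rp(1)[of "j+1"] j by (simp add: V_def)
  show "inner (pos a - pos v) (pos b - pos v) = - cos (2*pi / length g)"
    using c i1 by (auto simp: inner_commute)
  show "norm (pos a - pos v) = 1" "norm (pos b - pos v) = 1" using c n1 n2 by auto
qed

lemma three_step:
  assumes g: "g \<in> F" and ev: "edges_at g v = {{v,w},{v,a}}" and ew: "edges_at g w = {{w,v},{w,t}}"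
    and wa: "w \<noteq> a" and tv: "t \<noteq> v"
  shows "pos t - pos w = (2 * cos (2*pi / length g)) *\<^sub>R (pos w - pos v) + (pos a - pos v)"
proof -
  note gd = fd[OF R g] f3[OF R g]
  let ?k = "length g"
  let ?c = "cos (2*pi / length g)"
  have fe: "{v,w} \<in> face_edges g" "{v,a} \<in> face_edges g" "{w,t} \<in> face_edges g"
    using ev ew by (auto simp: edges_at_def)
  have "v \<in> set g" using face_edge_sub(1)[OF R g fe(1)] by auto
  then obtain j where j: "v = V g (j+1)" using set_V[OF gd] by blast
  have ne: "w \<noteq> v" "a \<noteq> v" "t \<noteq> w" using edge_ne fe g by (auto simp: insert_commute)
  have ne2: "V g j \<noteq> v" "V g (j+2) \<noteq> v" using V_distinct3[OF gd, of j] j by auto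
  have "{{V g j, v}, {v, V g (j+2)}} = {{v,w},{v,a}}" using edges_at_V[OF gd, of j] j ev by simp
  then have c: "(w = V g j \<and> a = V g (j+2)) \<or> (w = V g (j+2) \<and> a = V g j)"
    by (rule pair_cases[OF _ ne(1) ne(2) ne2(1) ne2(2) wa])
  have PV: "(\<lambda>j. (\<lambda>i. pos (g ! i)) (j mod length g)) i = pos (V g i)" for i by (simp add: V_def)
  note rp3 = reg_props(3)[OF rps_reg[OF R g], unfolded PV]
  from c show ?thesis
  proof
    assume h: "w = V g (j+2) \<and> a = V g j"
    have "edges_at g w = {{V g (j+1), V g (j+2)}, {V g (j+2), V g (j+3)}}"
      using edges_at_V[OF gd, of "j+1"] h by (simp add: add.assoc eval_nat_numeral)
    then have "{{w,v},{w,t}} = {{w,v},{w, V g (j+3)}}" using ew h j by (simp add: insert_commute)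
    moreover have "V g (j+3) \<noteq> w"
      using V_distinct3(2)[OF gd, of "j+1"] h by (simp add: add.assoc eval_nat_numeral)
    ultimately have t: "t = V g (j+3)" using tv ne by (auto simp: doubleton_eq_iff)
    have "pos (V g (j+3)) - (1 + 2*?c) *\<^sub>R pos (V g (j+2)) + (1 + 2*?c) *\<^sub>R pos (V g (j+1)) - pos (V g j) = 0"
      using rp3[of j] by simp
    then have "pos t = (1 + 2*?c) *\<^sub>R pos w - (1 + 2*?c) *\<^sub>R pos v + pos a"
      using t h j by (simp add: algebra_simps)
    then show ?thesis by (simp add: algebra_simps)
  next
    assume h: "w = V g j \<and> a = V g (j+2)"
    define m where "m = j + ?k - 1"
    have m1: "m + 1 = j + ?k" "m + 2 = (j+1) + ?k" "m + 3 = (j+2) + ?k" using gd(2) by (simp_all add: m_def)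
    have w': "w = V g (m+1)" unfolding m1(1) using h V_add_len[OF gd, of j] by simp
    have v': "v = V g (m+2)" unfolding m1(2) using j V_add_len[OF gd, of "j+1"] by simp
    have a': "a = V g (m+3)" unfolding m1(3) using h V_add_len[OF gd, of "j+2"] by simp
    have "edges_at g w = {{V g m, w}, {w, v}}" using edges_at_V[OF gd, of m] w' v' by simp
    then have "{{w,v},{w,t}} = {{w,v},{w, V g m}}" using ew by (simp add: insert_commute)
    moreover have "V g m \<noteq> w" using V_distinct3(1)[OF gd, of m] w' by simp
    ultimately have t: "t = V g m" using tv ne by (auto simp: doubleton_eq_iff)
    have "pos (V g (m+3)) - (1 + 2*?c) *\<^sub>R pos (V g (m+2)) + (1 + 2*?c) *\<^sub>R pos (V g (m+1)) - pos (V g m) = 0"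
      using rp3[of m] by simp
    then have "pos t = pos a - (1 + 2*?c) *\<^sub>R pos v + (1 + 2*?c) *\<^sub>R pos w"
      using t w' v' a' by (simp add: algebra_simps)
    then show ?thesis by (simp add: algebra_simps)
  qed
qed

end

context
  fixes F :: "'v list set" and pos :: "'v \<Rightarrow> real^3"
  assumes R: "rps F pos"
begin

lemma inE: "g \<in> F \<Longrightarrow> e \<in> edges_at g v \<Longrightarrow> e \<in> Ev F v"
  using face_edges_graph[OF R] by (auto simp: edges_at_def Ev_def)

lemma inS: "g \<in> F \<Longrightarrow> e \<in> edges_at g v \<Longrightarrow> g \<in> faces_at F v"
  using face_edge_sub(1)[OF R] by (auto simp: edges_at_def faces_at_def)

lemma cardE: "card (Ev F v) = card (faces_at F v)"
  using deg_eq[OF R, of v] by (simp add: vdeg_def Ev_def)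

lemma card_edges_at: "g \<in> F \<Longrightarrow> v \<in> set g \<Longrightarrow> card (edges_at g v) = 2"
  using edges_at_form[OF R] by (fastforce simp: doubleton_eq_iff)

lemma edges_at_sub: "g \<in> F \<Longrightarrow> edges_at g v \<subseteq> Ev F v"
  using inE by blast

lemma S_memI: "g \<in> F \<Longrightarrow> v \<in> set g \<Longrightarrow> g \<in> faces_at F v"
  by (simp add: faces_at_def)

lemma S_memD: "g \<in> faces_at F v \<Longrightarrow> g \<in> F \<and> v \<in> set g"
  by (simp add: faces_at_def)

lemma deg3_struct:
  assumes S3: "card (faces_at F v) = 3" and g1: "g1 \<in> F" and g2: "g2 \<in> F" and g12: "g1 \<noteq> g2"
    and e1: "edges_at g1 v = {{v,u1},{v,u2}}" and e2: "edges_at g2 v = {{v,u1},{v,u3}}"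
    and u12: "u1 \<noteq> u2" and u13: "u1 \<noteq> u3"
  shows "u3 \<noteq> u2 \<and> (\<exists>g3\<in>F. g3 \<noteq> g1 \<and> g3 \<noteq> g2 \<and> faces_at F v = {g1,g2,g3} \<and>
            edges_at g3 v = {{v,u2},{v,u3}})"
proof -
  let ?S = "faces_at F v" and ?E = "Ev F v"
  have E3: "card ?E = 3" using cardE S3 by simp
  have inE': "{v,u1} \<in> ?E" "{v,u2} \<in> ?E" "{v,u3} \<in> ?E"
    using inE[OF g1, of _ v] inE[OF g2, of _ v] e1 e2 by auto
  have g1S: "g1 \<in> ?S" using inS[OF g1, of "{v,u1}"] e1 by auto
  have g2S: "g2 \<in> ?S" using inS[OF g2, of "{v,u1}"] e2 by auto
  have fe1: "{v,u1} \<in> face_edges g1" "{v,u2} \<in> face_edges g1" using e1 by (auto simp: edges_at_def)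
  have fe2: "{v,u1} \<in> face_edges g2" "{v,u3} \<in> face_edges g2" using e2 by (auto simp: edges_at_def)
  have "card (?S - {g1,g2}) = 1" using S3 g1S g2S g12 finite_S[OF R] by (simp add: card_Diff_subset)
  then obtain g3 where g3S: "g3 \<in> ?S" "g3 \<noteq> g1" "g3 \<noteq> g2" by (metis Diff_iff card_1_singletonE insertCI)
  have Seq: "?S = {g1,g2,g3}"
  proof -
    have "{g1,g2,g3} \<subseteq> ?S" using g1S g2S g3S by auto
    moreover have "card {g1,g2,g3} = 3" using g12 g3S by auto
    ultimately show ?thesis using S3 card_subset_eq[OF finite_S[OF R]] by (metis)
  qed
  have g3: "g3 \<in> F" "v \<in> set g3" using S_memD[OF g3S(1)] by auto
  have c3: "card (edges_at g3 v) = 2" using card_edges_at[OF g3] .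
  have fin3: "finite (edges_at g3 v)" by (rule card_ge_0_finite) (simp add: c3)
  have not1: "{v,u1} \<notin> edges_at g3 v"
  proof
    assume "{v,u1} \<in> edges_at g3 v"
    then have "{v,u1} \<in> face_edges g3" by (simp add: edges_at_def)
    then show False using no_three[OF R g1 g2 g3(1) g12 g3S(2)[symmetric] g3S(3)[symmetric] fe1(1) fe2(1)] by blast
  qed
  have e12: "{v,u1} \<noteq> {v,u2}" "{v,u1} \<noteq> {v,u3}" using u12 u13 by (auto simp: doubleton_eq_iff)
  have u32: "u3 \<noteq> u2"
  proof
    assume u: "u3 = u2"
    have not2: "{v,u2} \<notin> edges_at g3 v"
    proof
      assume "{v,u2} \<in> edges_at g3 v"
      then have "{v,u2} \<in> face_edges g3" by (simp add: edges_at_def)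
      then show False using no_three[OF R g1 g2 g3(1) g12 g3S(2)[symmetric] g3S(3)[symmetric] fe1(2)] fe2(2) u by blast
    qed
    have "edges_at g3 v \<subseteq> ?E - {{v,u1},{v,u2}}" using edges_at_sub[OF g3(1)] not1 not2 by blast
    then have "card (edges_at g3 v) \<le> card (?E - {{v,u1},{v,u2}})" using finite_E[OF R] by (intro card_mono) auto
    also have "\<dots> = 1" using E3 inE' e12 by (simp add: card_Diff_subset)
    finally show False using c3 by simp
  qed
  have e23: "{v,u2} \<noteq> {v,u3}" using u32 by (auto simp: doubleton_eq_iff)
  have Eeq: "?E = {{v,u1},{v,u2},{v,u3}}"
  proof -
    have sub: "{{v,u1},{v,u2},{v,u3}} \<subseteq> ?E" using inE' by auto
    moreover have "card {{v,u1},{v,u2},{v,u3}} = 3" using e12 e23 by auto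
    then have "{{v,u1},{v,u2},{v,u3}} = ?E" using card_subset_eq[OF finite_E[OF R] sub] E3 by simp
    then show ?thesis by simp
  qed
  have "edges_at g3 v \<subseteq> {{v,u1},{v,u2},{v,u3}}" using edges_at_sub[OF g3(1), of v] unfolding Eeq .
  then have sub3: "edges_at g3 v \<subseteq> {{v,u2},{v,u3}}" using not1 by blast
  have "card {{v,u2},{v,u3}} = 2" using e23 by simp
  then have E3eq: "edges_at g3 v = {{v,u2},{v,u3}}"
    using c3 card_subset_eq[OF _ sub3] by simp
  show ?thesis
  proof (intro conjI bexI[where x=g3])
    show "u3 \<noteq> u2" by (rule u32)
    show "g3 \<in> F" by (rule g3(1))
    show "g3 \<noteq> g1" "g3 \<noteq> g2" by (rule g3S(2), rule g3S(3))
    show "faces_at F v = {g1,g2,g3}" by (rule Seq)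
    show "edges_at g3 v = {{v,u2},{v,u3}}" by (rule E3eq)
  qed
qed

lemma deg4_struct:
  assumes S4: "card (faces_at F v) = 4" and f: "f \<in> F" and A: "A \<in> F" and C: "C \<in> F"
    and fA: "f \<noteq> A" and fC: "f \<noteq> C" and AC: "A \<noteq> C"
    and ef: "edges_at f v = {{v,w1},{v,w6}}" and eA: "edges_at A v = {{v,w1},{v,uA}}"
    and eC: "edges_at C v = {{v,w6},{v,uC}}"
    and w16: "w1 \<noteq> w6" and uA1: "uA \<noteq> w1" and uC6: "uC \<noteq> w6"
  shows "uA \<noteq> uC \<and> (\<exists>B\<in>F. edges_at B v = {{v,uA},{v,uC}})"
proof -
  let ?S = "faces_at F v" and ?E = "Ev F v"
  have E4: "card ?E = 4" using cardE S4 by simp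
  have inE': "{v,w1} \<in> ?E" "{v,w6} \<in> ?E" "{v,uA} \<in> ?E" "{v,uC} \<in> ?E"
    using inE[OF f, of _ v] inE[OF A, of _ v] inE[OF C, of _ v] ef eA eC by auto
  have fS: "f \<in> ?S" using inS[OF f, of "{v,w1}"] ef by auto
  have AS: "A \<in> ?S" using inS[OF A, of "{v,w1}"] eA by auto
  have CS: "C \<in> ?S" using inS[OF C, of "{v,w6}"] eC by auto
  have fef: "{v,w1} \<in> face_edges f" "{v,w6} \<in> face_edges f" using ef by (auto simp: edges_at_def)
  have feA: "{v,w1} \<in> face_edges A" "{v,uA} \<in> face_edges A" using eA by (auto simp: edges_at_def)
  have feC: "{v,w6} \<in> face_edges C" "{v,uC} \<in> face_edges C" using eC by (auto simp: edges_at_def)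
  have d1: "{v,w1} \<noteq> {v,w6}" "{v,uA} \<noteq> {v,w1}" "{v,uC} \<noteq> {v,w6}"
    using w16 uA1 uC6 by (auto simp: doubleton_eq_iff)
  have d2: "{v,uA} \<noteq> {v,w6}"
  proof
    assume "{v,uA} = {v,w6}"
    then show False using no_three[OF R f C A fC fA AC[symmetric] fef(2) feC(1)] feA(2) by simp
  qed
  have d3: "{v,uC} \<noteq> {v,w1}"
  proof
    assume "{v,uC} = {v,w1}"
    then show False using no_three[OF R f A C fA fC AC fef(1) feA(1)] feC(2) by simp
  qed
  have "card (?S - {f,A,C}) = 1" using S4 fS AS CS fA fC AC finite_S[OF R] by (simp add: card_Diff_subset)
  then obtain B where BS: "B \<in> ?S" "B \<noteq> f" "B \<noteq> A" "B \<noteq> C" by (metis Diff_iff card_1_singletonE insertCI)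
  have Seq: "?S = {f,A,C,B}"
  proof -
    have "{f,A,C,B} \<subseteq> ?S" using fS AS CS BS by auto
    moreover have "card {f,A,C,B} = 4" using fA fC AC BS by auto
    ultimately show ?thesis using S4 card_subset_eq[OF finite_S[OF R]] by (metis)
  qed
  have B: "B \<in> F" "v \<in> set B" using S_memD[OF BS(1)] by auto
  have cB: "card (edges_at B v) = 2" using card_edges_at[OF B] .
  have n1: "{v,w1} \<notin> edges_at B v"
  proof
    assume "{v,w1} \<in> edges_at B v"
    then have "{v,w1} \<in> face_edges B" by (simp add: edges_at_def)
    then show False using no_three[OF R f A B(1) fA BS(2)[symmetric] BS(3)[symmetric] fef(1) feA(1)] by blast
  qed
  have n6: "{v,w6} \<notin> edges_at B v"
  proof
    assume "{v,w6} \<in> edges_at B v"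
    then have "{v,w6} \<in> face_edges B" by (simp add: edges_at_def)
    then show False using no_three[OF R f C B(1) fC BS(2)[symmetric] BS(4)[symmetric] fef(2) feC(1)] by blast
  qed
  have sub: "edges_at B v \<subseteq> ?E - {{v,w1},{v,w6}}" using edges_at_sub[OF B(1)] n1 n6 by blast
  have cD: "card (?E - {{v,w1},{v,w6}}) = 2" using E4 inE' d1 by (simp add: card_Diff_subset)
  have finD: "finite (?E - {{v,w1},{v,w6}})" using finite_E[OF R] by simp
  have BE: "edges_at B v = ?E - {{v,w1},{v,w6}}" using card_subset_eq[OF finD sub] cB cD by simp
  have AinB: "{v,uA} \<in> edges_at B v" "{v,uC} \<in> edges_at B v" using BE inE' d1 d2 d3 by auto
  have dAC: "{v,uA} \<noteq> {v,uC}"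
  proof
    assume eq: "{v,uA} = {v,uC}"
    obtain e' where e': "e' \<in> edges_at B v" "e' \<noteq> {v,uA}"
    proof -
      have "edges_at B v \<noteq> {{v,uA}}" using cB by auto
      then show ?thesis using that AinB(1) by blast
    qed
    have e'D: "e' \<noteq> {v,w1}" "e' \<noteq> {v,w6}" "v \<in> e'" "e' \<in> face_edges B"
      using e'(1) BE by (auto simp: edges_at_def)
    obtain h where h: "h \<in> F" "h \<noteq> B" "e' \<in> face_edges h" using other_face[OF R B(1) e'D(4)] by blast
    have "h \<in> ?S" using inS[OF h(1), of e'] h(3) e'D(3) by (simp add: edges_at_def)
    then have "h = f \<or> h = A \<or> h = C" using Seq h(2) by auto
    moreover have "e' \<in> edges_at h v" using h(3) e'D(3) by (simp add: edges_at_def)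
    ultimately show False
    proof (elim disjE)
      assume "e' \<in> edges_at h v" "h = f" then show False using ef e'D(1,2) by simp
    next
      assume "e' \<in> edges_at h v" "h = A" then show False using eA e'D(1) e'(2) by simp
    next
      assume "e' \<in> edges_at h v" "h = C" then show False using eC e'D(2) e'(2) eq by simp
    qed
  qed
  have "{{v,uA},{v,uC}} \<subseteq> edges_at B v" using AinB by auto
  moreover have "card {{v,uA},{v,uC}} = 2" using dAC by simp
  moreover have "finite (edges_at B v)" by (rule card_ge_0_finite) (simp add: cB)
  ultimately have Beq: "{{v,uA},{v,uC}} = edges_at B v"
    using cB card_subset_eq[of "edges_at B v" "{{v,uA},{v,uC}}"] by simp
  have uAC: "uA \<noteq> uC" using dAC by auto
  show ?thesis
  proof (intro conjI bexI[where x=B])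
    show "uA \<noteq> uC" by (rule uAC)
    show "B \<in> F" by (rule B(1))
    show "edges_at B v = {{v,uA},{v,uC}}" by (rule Beq[symmetric])
  qed
qed

end

lemma ia_eq: "interior_angle k = pi - 2*pi/k" by (simp add: interior_angle_def)

lemma ia_mono: "0 < m \<Longrightarrow> m \<le> k \<Longrightarrow> interior_angle m \<le> interior_angle k"
  unfolding interior_angle_def by (simp add: frac_le)

lemma ia_range: "k \<in> {5,7,8,9,10} \<Longrightarrow> 3*pi/5 \<le> interior_angle k \<and> interior_angle k < pi"
proof -
  assume k: "k \<in> {5,7,8,9,10}"
  then have "interior_angle 5 \<le> interior_angle k" by (intro ia_mono) auto
  moreover have "interior_angle 5 = 3*pi/5" by (simp add: interior_angle_def)
  moreover have "interior_angle k < pi" using k pi_gt_zero by (auto simp: interior_angle_def)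
  ultimately show ?thesis by simp
qed

lemma cos_ia: "cos (interior_angle k) = - cos (2*pi/k)"
  by (simp add: interior_angle_def cos_diff)

lemma c5_facts: "0 < cos (2*pi/5)" "cos (2*pi/5) < 1/3" "4 * (cos (2*pi/5))^2 = 1 - 2 * cos (2*pi/5)"
proof -
  define t where "t = 2*pi/5"
  define c where "c = cos t"
  have "3*t = 2*pi - 2*t" unfolding t_def by simp
  then have "cos (3*t) = cos (2*pi - 2*t)" by (simp only:)
  also have "\<dots> = cos (2*t)" by (rule cos_2pi_minus)
  finally have "4*c^3 - 3*c = 2*c^2 - 1" unfolding c_def by (simp add: cos_treble_cos cos_double_cos)
  then have fac: "(c - 1) * (4*c^2 + 2*c - 1) = 0" by (simp add: algebra_simps power2_eq_square power3_eq_cube)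
  have p1: "0 < 2*pi/5" "2*pi/5 \<le> pi" using pi_gt_zero by linarith+
  have "cos (2*pi/5) < cos 0" by (rule cos_monotone_0_pi[OF _ p1]) simp
  then have "c < 1" unfolding c_def t_def by simp
  with fac have q: "4*c^2 + 2*c - 1 = 0" by simp
  have p2: "- (pi/2) < 2*pi/5" "2*pi/5 < pi/2" using pi_gt_zero by linarith+
  have cpos: "c > 0" unfolding c_def t_def by (rule cos_gt_zero_pi[OF p2])
  show "0 < cos (2*pi/5)" using cpos by (simp add: c_def t_def)
  have "c < 1/3"
  proof (rule ccontr)
    assume "\<not> c < 1/3"
    then have "c \<ge> 1/3" by simp
    then have "c^2 \<ge> (1/3)^2" using power_mono by fastforce
    then show False using q \<open>c \<ge> 1/3\<close> by (simp add: power2_eq_square)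
  qed
  then show "cos (2*pi/5) < 1/3" by (simp add: c_def t_def)
  show "4 * (cos (2*pi/5))^2 = 1 - 2 * cos (2*pi/5)" using q by (simp add: c_def t_def)
qed

lemma cn_facts:
  assumes "(n::nat) \<ge> 7"
  shows "1/2 < cos (2*pi/n)" "cos (2*pi/n) < 1"
proof -
  have n: "real n \<ge> 7" using assms by simp
  have "2*pi/n \<le> 2*pi/7" by (rule divide_left_mono) (use n pi_gt_zero in auto)
  also have "\<dots> < pi/3" using pi_gt_zero by simp
  finally have lt: "2*pi/n < pi/3" .
  have pos: "0 < 2*pi/n" using n pi_gt_zero by simp
  have "cos (pi/3) < cos (2*pi/n)" using cos_monotone_0_pi[of "2*pi/n" "pi/3"] lt pos pi_gt_zero by simp
  then show "1/2 < cos (2*pi/n)" by (simp add: cos_60)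
  have "cos (2*pi/n) < cos 0" using cos_monotone_0_pi[of 0 "2*pi/n"] lt pos pi_gt_zero by simp
  then show "cos (2*pi/n) < 1" by simp
qed

lemma cos_k_ge_c5:
  assumes "(k::nat) \<ge> 5"
  shows "cos (2*pi/5) \<le> cos (2*pi/k)"
proof -
  have k: "real k \<ge> 5" using assms by simp
  have "2*pi/k \<le> 2*pi/5" by (rule divide_left_mono) (use k pi_gt_zero in auto)
  moreover have "0 \<le> 2*pi/k" using k pi_gt_zero by simp
  moreover have "2*pi/5 \<le> pi" using pi_gt_zero by simp
  ultimately show ?thesis by (intro cos_monotone_0_pi_le) auto
qed


context
  fixes F :: "'v list set" and pos :: "'v \<Rightarrow> real^3"
  assumes R: "rps F pos" and L: "\<forall>g\<in>F. length g \<in> {5, 7, 8, 9, 10}"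
begin

lemma len_ge5: "g \<in> F \<Longrightarrow> length g \<ge> 5" using L by auto

lemma deg3_sum:
  assumes g1: "g1 \<in> F" "v \<in> set g1" and S3: "card (faces_at F v) = 3"
  shows "\<exists>g2 g3. g2 \<in> F \<and> g3 \<in> F \<and> g1 \<noteq> g2 \<and> g1 \<noteq> g3 \<and> g2 \<noteq> g3 \<and>
           faces_at F v = {g1,g2,g3} \<and>
           interior_angle (length g1) + interior_angle (length g2) + interior_angle (length g3) \<le> 2*pi"
proof -
  obtain u1 u2 where u: "u1 \<noteq> u2" "u1 \<noteq> v" "u2 \<noteq> v" "edges_at g1 v = {{v,u1},{v,u2}}"
    using edges_at_form[OF R g1] by blast
  have fe: "{v,u1} \<in> face_edges g1" using u(4) by (auto simp: edges_at_def)
  obtain g2 where g2: "g2 \<in> F" "g2 \<noteq> g1" "{v,u1} \<in> face_edges g2" using other_face[OF R g1(1) fe] by blast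
  obtain u3 where u3: "u3 \<noteq> u1" "u3 \<noteq> v" "edges_at g2 v = {{v,u1},{v,u3}}"
    using edge_other_end[OF R g2(1) g2(3)] by blast
  obtain g3 where g3: "u3 \<noteq> u2" "g3 \<in> F" "g3 \<noteq> g1" "g3 \<noteq> g2" "faces_at F v = {g1,g2,g3}"
      "edges_at g3 v = {{v,u2},{v,u3}}"
    using deg3_struct[OF R S3 g1(1) g2(1) g2(2)[symmetric] u(4) u3(3) u(1) u3(1)[symmetric]] by blast
  define x where "x = pos u1 - pos v"
  define y where "y = pos u2 - pos v"
  define z where "z = pos u3 - pos v"
  note a1 = angle_at[OF R g1(1) u(4) u(1), folded x_def y_def]
  note a2 = angle_at[OF R g2(1) u3(3) u3(1)[symmetric], folded x_def z_def]
  note a3 = angle_at[OF R g3(2) g3(6) g3(1)[symmetric], folded y_def z_def]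
  define A1 where "A1 = interior_angle (length g1)"
  define A2 where "A2 = interior_angle (length g2)"
  define A3 where "A3 = interior_angle (length g3)"
  have r1: "3*pi/5 \<le> A1" "A1 < pi" using ia_range L g1(1) unfolding A1_def by blast+
  have r2: "3*pi/5 \<le> A2" "A2 < pi" using ia_range L g2(1) unfolding A2_def by blast+
  have r3: "3*pi/5 \<le> A3" "A3 < pi" using ia_range L g3(2) unfolding A3_def by blast+
  have xy: "inner x y = cos A1" using a1(1) by (simp add: A1_def cos_ia)
  have xz: "inner x z = cos A2" using a2(1) by (simp add: A2_def cos_ia)
  have yz: "inner y z = cos A3" using a3(1) by (simp add: A3_def cos_ia)
  have "\<bar>cos A1\<bar> < 1"
  proof -
    have "0 < A1" using r1 pi_gt_zero by linarith
    then have "cos A1 < cos 0" by (intro cos_monotone_0_pi) (use r1 in auto)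
    moreover have "cos pi < cos A1" by (intro cos_monotone_0_pi) (use r1 \<open>0 < A1\<close> in auto)
    ultimately show ?thesis by simp
  qed
  then have G: "1 - (inner x y)^2 - (inner y z)^2 - (inner x z)^2 + 2 * inner x y * inner y z * inner x z \<ge> 0"
    using gram3[of x y z] a1 a2 a3 xy by simp
  have "A1 + A2 + A3 \<le> 2*pi"
  proof (rule spherical_sum)
    show "1 - (cos A1)^2 - (cos A2)^2 - (cos A3)^2 + 2 * cos A1 * cos A2 * cos A3 \<ge> 0"
      using G unfolding xy xz yz by (simp add: algebra_simps)
  qed (use r1 r2 r3 pi_gt_zero in linarith)+
  then show ?thesis using g2 g3 unfolding A1_def A2_def A3_def by blast
qed

lemma good55:
  assumes f: "f \<in> F" "v \<in> set f" and n7: "length f \<ge> 7" and S3: "card (faces_at F v) = 3"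
  shows "vertex_type_55n F v (length f)"
    "vertex_curvature F v = 2*pi - interior_angle (length f) - 2 * interior_angle 5"
proof -
  obtain g2 g3 where g: "g2 \<in> F" "g3 \<in> F" "f \<noteq> g2" "f \<noteq> g3" "g2 \<noteq> g3"
      "faces_at F v = {f,g2,g3}"
      "interior_angle (length f) + interior_angle (length g2) + interior_angle (length g3) \<le> 2*pi"
    using deg3_sum[OF f S3] by blast
  have a7: "interior_angle 7 \<le> interior_angle (length f)" using n7 by (intro ia_mono) auto
  have a5: "interior_angle 5 \<le> interior_angle (length g2)" "interior_angle 5 \<le> interior_angle (length g3)"
    using len_ge5 g by (auto intro: ia_mono)
  have v7: "interior_angle 7 = 5*pi/7" "interior_angle 5 = 3*pi/5" by (simp_all add: interior_angle_def)
  have l2: "length g2 = 5"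
  proof (rule ccontr)
    assume "length g2 \<noteq> 5"
    then have "length g2 \<ge> 7" using L g(1) by auto
    then have "interior_angle 7 \<le> interior_angle (length g2)" by (intro ia_mono) auto
    then show False using g(7) a7 a5 v7 pi_gt_zero by linarith
  qed
  have l3: "length g3 = 5"
  proof (rule ccontr)
    assume "length g3 \<noteq> 5"
    then have "length g3 \<ge> 7" using L g(2) by auto
    then have "interior_angle 7 \<le> interior_angle (length g3)" by (intro ia_mono) auto
    then show False using g(7) a7 a5 v7 pi_gt_zero by linarith
  qed
  have fn5: "length f \<noteq> 5" using n7 by simp
  have c5: "{g \<in> faces_at F v. length g = 5} = {g2,g3}" using g l2 l3 fn5 by auto
  have cn: "{g \<in> faces_at F v. length g = length f} = {f}" using g l2 l3 fn5 by auto
  show "vertex_type_55n F v (length f)"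
    unfolding vertex_type_55n_def deg_eq[OF R] c5 cn using S3 g(5) by simp
  show "vertex_curvature F v = 2*pi - interior_angle (length f) - 2 * interior_angle 5"
    unfolding vertex_curvature_def g(6) using g(3-5) l2 l3 by simp
qed

lemma good_card3: "vertex_type_55n F v n \<Longrightarrow> card (faces_at F v) = 3"
  by (simp add: vertex_type_55n_def)

lemma wing:
  assumes f: "f \<in> F" and n7: "length f \<ge> 7"
    and ef: "edges_at f v = {{v,w},{v,y}}" and wy: "w \<noteq> y"
    and gw: "vertex_type_55n F w (length f)"
    and A: "A \<in> F" "A \<noteq> f" and eA: "edges_at A v = {{v,w},{v,a}}" and aw: "a \<noteq> w"
  shows "inner (pos y - pos v) (pos a - pos v) = - cos (2*pi/5)" "length A = 5"
proof -
  have fvw: "{w,v} \<in> face_edges f" using ef by (auto simp: edges_at_def insert_commute)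
  have Avw: "{w,v} \<in> face_edges A" using eA by (auto simp: edges_at_def insert_commute)
  obtain w2 where w2: "w2 \<noteq> v" "w2 \<noteq> w" "edges_at f w = {{w,v},{w,w2}}"
    using edge_other_end[OF R f fvw] by blast
  obtain t where t: "t \<noteq> v" "t \<noteq> w" "edges_at A w = {{w,v},{w,t}}"
    using edge_other_end[OF R A(1) Avw] by blast
  have S3: "card (faces_at F w) = 3" using gw by (rule good_card3)
  obtain X where X: "t \<noteq> w2" "X \<in> F" "X \<noteq> f" "X \<noteq> A" "faces_at F w = {f,A,X}"
      "edges_at X w = {{w,w2},{w,t}}"
    using deg3_struct[OF R S3 f A(1) A(2)[symmetric] w2(3) t(3) w2(1)[symmetric] t(1)[symmetric]] by blast
  have "card {g \<in> faces_at F w. length g = 5} = 2" using gw by (simp add: vertex_type_55n_def)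
  moreover have "{g \<in> faces_at F w. length g = 5} \<subseteq> {A,X}" using X(5) n7 by auto
  moreover have "finite {A,X}" by simp
  ultimately have "{g \<in> faces_at F w. length g = 5} = {A,X}"
    using X(4) by (metis card_2_iff card_subset_eq)
  then have l5: "length A = 5" "length X = 5" using X(5) by blast+
  show "length A = 5" by (rule l5(1))
  define x where "x = pos w - pos v"
  define y' where "y' = pos y - pos v"
  define a' where "a' = pos a - pos v"
  define cn where "cn = cos (2*pi/length f)"
  define c5 where "c5 = cos (2*pi/5)"
  have q: "pos w2 - pos w = (2*cn) *\<^sub>R x + y'"
    using three_step[OF R f ef w2(3) wy w2(1)] unfolding x_def y'_def cn_def .
  have r: "pos t - pos w = (2*c5) *\<^sub>R x + a'"
    using three_step[OF R A(1) eA t(3) aw[symmetric] t(1)] l5(1) unfolding x_def a'_def c5_def by simp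
  have qr: "inner (pos w2 - pos w) (pos t - pos w) = - c5"
    using angle_at(1)[OF R X(2) X(6) X(1)[symmetric]] l5(2) unfolding c5_def by simp
  have xy: "inner x y' = - cn" "norm x = 1" using angle_at[OF R f ef wy] unfolding x_def y'_def cn_def by auto
  have xa: "inner x a' = - c5" using angle_at[OF R A(1) eA aw[symmetric]] l5(1) unfolding x_def a'_def c5_def by auto
  have xx: "inner x x = 1" using xy(2) by (simp add: dot_square_norm)
  have "inner (pos w2 - pos w) (pos t - pos w) = 4*cn*c5*inner x x + 2*cn*inner x a' + 2*c5*inner y' x + inner y' a'"
    unfolding q r by (simp add: inner_add_left inner_add_right algebra_simps)
  also have "\<dots> = inner y' a'" using xx xy(1) xa by (simp add: inner_commute algebra_simps)
  finally show "inner (pos y - pos v) (pos a - pos v) = - cos (2*pi/5)" using qr unfolding y'_def a'_def c5_def by simp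
qed

end

context
  fixes F :: "'v list set" and pos :: "'v \<Rightarrow> real^3"
  assumes R: "rps F pos" and L: "\<forall>g\<in>F. length g \<in> {5, 7, 8, 9, 10}"
begin

lemma deg4_excl:
  assumes f: "f \<in> F" and n7: "length f \<ge> 7" and S4: "card (faces_at F v) = 4"
    and ef: "edges_at f v = {{v,w1},{v,w6}}" and w16: "w1 \<noteq> w6"
    and g1: "vertex_type_55n F w1 (length f)" and g6: "vertex_type_55n F w6 (length f)"
  shows False
proof -
  have fe1: "{v,w1} \<in> face_edges f" and fe6: "{v,w6} \<in> face_edges f" using ef by (auto simp: edges_at_def)
  obtain A where A: "A \<in> F" "A \<noteq> f" "{v,w1} \<in> face_edges A" using other_face[OF R f fe1] by blast
  obtain C where C: "C \<in> F" "C \<noteq> f" "{v,w6} \<in> face_edges C" using other_face[OF R f fe6] by blast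
  obtain uA where uA: "uA \<noteq> w1" "uA \<noteq> v" "edges_at A v = {{v,w1},{v,uA}}"
    using edge_other_end[OF R A(1) A(3)] by blast
  obtain uC where uC: "uC \<noteq> w6" "uC \<noteq> v" "edges_at C v = {{v,w6},{v,uC}}"
    using edge_other_end[OF R C(1) C(3)] by blast
  have wv: "w1 \<noteq> v" "w6 \<noteq> v" using edge_ne[OF R f] fe1 fe6 by auto
  have AC: "A \<noteq> C"
  proof
    assume "A = C"
    then have "{v,w1,w6} \<subseteq> set f \<inter> set A"
      using face_edge_sub(1)[OF R f fe1] face_edge_sub(1)[OF R f fe6]
        face_edge_sub(1)[OF R A(1) A(3)] face_edge_sub(1)[OF R C(1) C(3)] by auto
    then have "card {v,w1,w6} \<le> card (set f \<inter> set A)" by (intro card_mono) auto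
    moreover have "card {v,w1,w6} = 3" using wv w16 by auto
    ultimately show False using meet_le2[OF R f A(1) A(2)[symmetric]] by simp
  qed
  have ef': "edges_at f v = {{v,w6},{v,w1}}" using ef by (simp add: insert_commute)
  note wA = wing[OF R L f n7 ef w16 g1 A(1) A(2) uA(3) uA(1)]
  note wC = wing[OF R L f n7 ef' w16[symmetric] g6 C(1) C(2) uC(3) uC(1)]
  define x where "x = pos w1 - pos v"
  define y where "y = pos w6 - pos v"
  define a where "a = pos uA - pos v"
  define c where "c = pos uC - pos v"
  define c5 where "c5 = cos (2*pi/5)"
  define cn where "cn = cos (2*pi/length f)"
  note anA = angle_at[OF R A(1) uA(3) uA(1)[symmetric], folded x_def a_def]
  note anC = angle_at[OF R C(1) uC(3) uC(1)[symmetric], folded y_def c_def]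
  note anf = angle_at[OF R f ef w16, folded x_def y_def]
  obtain B where B: "uA \<noteq> uC" "B \<in> F" "edges_at B v = {{v,uA},{v,uC}}"
    using deg4_struct[OF R S4 f A(1) C(1) A(2)[symmetric] C(2)[symmetric] AC ef uA(3) uC(3) w16 uA(1) uC(1)]
    by blast
  note anB = angle_at[OF R B(2) B(3) B(1), folded a_def c_def]
  have cnf: "1/2 < cn" "cn < 1" using cn_facts[OF n7] by (simp_all add: cn_def)
  have c5f: "0 < c5" "c5 < 1/3" "4 * c5^2 = 1 - 2 * c5" using c5_facts by (simp_all add: c5_def)
  have ineq: "inner a c \<ge> 4 * c5^2 / (1 - cn) - 1"
  proof (rule deg4_ineq)
    show "norm x = 1" "norm y = 1" "norm a = 1" "norm c = 1" using anA anC by auto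
    show "inner x y = - cn" using anf unfolding cn_def by simp
    show "inner x a = - c5" using anA wA(2) unfolding c5_def by simp
    show "inner y a = - c5" using wA(1) unfolding c5_def y_def a_def by simp
    show "inner x c = - c5" using wC(1) unfolding c5_def x_def c_def by simp
    show "inner y c = - c5" using anC wC(2) unfolding c5_def by simp
    show "cn < 1" by (rule cnf(2))
  qed
  have "cos (2*pi/5) \<le> cos (2*pi/length B)" using cos_k_ge_c5 len_ge5[OF R L B(2)] by blast
  then have ac: "inner a c \<le> - c5" using anB(1) unfolding c5_def by simp
  have D: "1 - cn > 0" using cnf by simp
  have "(1 - 2*c5) / (1 - cn) \<le> 1 - c5" using ineq ac c5f(3) by simp
  then have "1 - 2*c5 \<le> (1 - c5) * (1 - cn)" using D by (simp add: pos_divide_le_eq)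
  then have h: "cn \<le> c5 * (1 + cn)" by (simp add: algebra_simps)
  also have "c5 * (1 + cn) < (1/3) * (1 + cn)" using c5f(2) cnf by (intro mult_strict_right_mono) auto
  also have "\<dots> = 1/3 + cn/3" by simp
  finally show False using cnf by linarith
qed

lemma bad_bound:
  assumes f: "f \<in> F" "v \<in> set f" and n7: "length f \<ge> 7" and bad: "\<not> vertex_type_55n F v (length f)"
  shows "card (faces_at F v) \<ge> 4"
    "vertex_curvature F v \<le> 2*pi - interior_angle (length f) - (real (card (faces_at F v)) - 1) * (3*pi/5)"
proof -
  let ?S = "faces_at F v"
  have "card ?S \<ge> 3" by (rule S_ge3[OF R f])
  moreover have "card ?S \<noteq> 3" using good55(1)[OF R L f n7] bad by blast
  ultimately show S4: "card ?S \<ge> 4" by simp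
  have fS: "f \<in> ?S" using f by (simp add: faces_at_def)
  have fin: "finite ?S" by (rule finite_S[OF R])
  have "(\<Sum>g\<in>?S. interior_angle (length g)) = interior_angle (length f) + (\<Sum>g\<in>?S - {f}. interior_angle (length g))"
    using sum.remove[OF fin fS] by simp
  moreover have "real (card (?S - {f})) * (3*pi/5) \<le> (\<Sum>g\<in>?S - {f}. interior_angle (length g))"
  proof (rule sum_bounded_below)
    fix g assume "g \<in> ?S - {f}"
    then have "g \<in> F" by (simp add: faces_at_def)
    then show "3*pi/5 \<le> interior_angle (length g)" using ia_range L by blast
  qed
  moreover have "real (card (?S - {f})) = real (card ?S) - 1" using fS fin S4 by (simp add: of_nat_diff)
  ultimately have "(real (card ?S) - 1) * (3*pi/5) \<le> (\<Sum>g\<in>?S - {f}. interior_angle (length g))"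
    "(\<Sum>g\<in>?S. interior_angle (length g)) = interior_angle (length f) + (\<Sum>g\<in>?S - {f}. interior_angle (length g))"
    by simp_all
  then show "vertex_curvature F v \<le> 2*pi - interior_angle (length f) - (real (card ?S) - 1) * (3*pi/5)"
    unfolding vertex_curvature_def by linarith
qed

end

theorem lemma3p1:
  fixes F :: "'v list set" and pos :: "'v \<Rightarrow> real^3" and f :: "'v list"
  assumes "rps F pos"
    and "\<forall>g\<in>F. length g \<in> {5, 7, 8, 9, 10}"
    and "f \<in> F" and "length f \<ge> 7"
  shows "(facial_curvature F f > 0 \<longrightarrow> (\<forall>v\<in>set f. vertex_type_55n F v (length f)))
       \<and> ((\<exists>v\<in>set f. vertex_curvature F v < 0) \<longrightarrow> facial_curvature F f < 0)"
proof -
  note R = assms(1) and L = assms(2) and f = assms(3) and n7 = assms(4)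
  define n where "n = length f"
  have nv: "n \<in> {7,8,9,10}" using L f n7 unfolding n_def by auto
  have npos: "real n > 0" using n7 unfolding n_def by linarith
  define t where "t = (\<lambda>v. vertex_curvature F v / real (vdeg F v))"
  have fc: "facial_curvature F f = (\<Sum>v\<in>set f. t v)" unfolding facial_curvature_def t_def ..
  define G where "G = {v \<in> set f. vertex_type_55n F v n}"
  define Bd where "Bd = {v \<in> set f. \<not> vertex_type_55n F v n}"
  define gam where "gam = pi * ((2/n - 1/5)/3)"
  define K where "K = 2*pi - interior_angle n + 3*pi/5"
  have Kpos: "K > 0"
  proof -
    have "K = pi + 2*pi/n + 3*pi/5" unfolding K_def interior_angle_def by simp
    moreover have "2*pi/n > 0" using pi_gt_zero npos by simp
    ultimately show ?thesis using pi_gt_zero by linarith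
  qed
  have goodcurv: "vertex_curvature F v = pi * (2/n - 1/5)" if "v \<in> set f" "vertex_type_55n F v n" for v
  proof -
    have "card (faces_at F v) = 3" using that(2) by (simp add: vertex_type_55n_def)
    then have "vertex_curvature F v = 2*pi - interior_angle n - 2 * interior_angle 5"
      using good55(2)[OF R L f that(1) n7] unfolding n_def by simp
    then show ?thesis unfolding interior_angle_def using npos by (simp add: field_simps)
  qed
  have goodt: "t v = gam" if "v \<in> set f" "vertex_type_55n F v n" for v
  proof -
    have "vdeg F v = 3" using that(2) by (simp add: vertex_type_55n_def)
    then show ?thesis unfolding t_def gam_def using goodcurv[OF that] by simp
  qed
  have badt: "t v \<le> K / real (card (faces_at F v)) - 3*pi/5" "card (faces_at F v) \<ge> 4"
    if "v \<in> set f" "\<not> vertex_type_55n F v n" for v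
  proof -
    note bb = bad_bound[OF R L f that(1) n7 that(2)[unfolded n_def]]
    show "card (faces_at F v) \<ge> 4" using bb(1) .
    define d where "d = real (card (faces_at F v))"
    have dpos: "d > 0" using bb(1) unfolding d_def by simp
    have e: "(d - 1) * (3*pi/5) = d * (3*pi/5) - 3*pi/5" by (simp add: left_diff_distrib)
    have "vertex_curvature F v \<le> K - d * (3*pi/5)" using bb(2) e unfolding K_def d_def n_def
      by linarith
    then have "vertex_curvature F v / d \<le> (K - d * (3*pi/5)) / d" using dpos by (simp add: divide_right_mono)
    also have "\<dots> = K / d - 3*pi/5" using dpos by (simp add: field_simps)
    finally show "t v \<le> K / real (card (faces_at F v)) - 3*pi/5"
      unfolding t_def d_def deg_eq[OF R] .
  qed
  have fin: "finite G" "finite Bd" unfolding G_def Bd_def by simp_all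
  have un: "set f = G \<union> Bd" "G \<inter> Bd = {}" unfolding G_def Bd_def by auto
  have cardsum: "card G + card Bd = n"
    using card_Un_disjoint[OF fin un(2)] un(1) distinct_card[OF fd[OF R f]] unfolding n_def by simp
  have sumG: "(\<Sum>v\<in>G. t v) = real (card G) * gam" using goodt unfolding G_def by simp
  have main: "facial_curvature F f < 0" if ne: "Bd \<noteq> {}"
  proof -
    have split: "facial_curvature F f = (\<Sum>v\<in>G. t v) + (\<Sum>v\<in>Bd. t v)"
      unfolding fc un(1) by (rule sum.union_disjoint[OF fin un(2)])
    have b1: "card Bd \<ge> 1" using ne fin(2) by (simp add: Suc_le_eq card_gt_0_iff)
    show ?thesis
    proof (cases "n \<noteq> 7 \<or> card Bd \<ge> 2")
      case True
      have "(\<Sum>v\<in>Bd. t v) \<le> (\<Sum>v\<in>Bd. K/4 - 3*pi/5)"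
      proof (rule sum_mono)
        fix v assume "v \<in> Bd"
        then have v: "v \<in> set f" "\<not> vertex_type_55n F v n" unfolding Bd_def by auto
        have "K / real (card (faces_at F v)) \<le> K / 4"
          using badt(2)[OF v] Kpos by (intro divide_left_mono) auto
        then show "t v \<le> K/4 - 3*pi/5" using badt(1)[OF v] by linarith
      qed
      then have "facial_curvature F f \<le> real (card G) * gam + real (card Bd) * (K/4 - 3*pi/5)"
        using split sumG by simp
      also have "\<dots> = pi * (real (card G) * ((2/n - 1/5)/3) + real (card Bd) * (1/(2*n) - 1/5))"
        unfolding gam_def K_def interior_angle_def using npos by (simp add: field_simps)
      also have "\<dots> < 0"
      proof (rule mult_pos_neg[OF pi_gt_zero])
        have cg: "real (card G) = real n - real (card Bd)" using cardsum by linarith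
        have b1': "real (card Bd) \<ge> 1" using b1 by simp
        show "real (card G) * ((2/n - 1/5)/3) + real (card Bd) * (1/(2*n) - 1/5) < 0"
          using nv True b1' unfolding cg
          by (auto simp: field_simps)
      qed
      finally show ?thesis .
    next
      case False
      then have n7': "n = 7" and b1e: "card Bd = 1" using b1 by auto
      then obtain v where Bv: "Bd = {v}" by (metis card_1_singletonE)
      then have v: "v \<in> set f" "\<not> vertex_type_55n F v n" unfolding Bd_def by auto
      have G6: "card G = 6" using cardsum n7' b1e by simp
      obtain a b where ab: "a \<noteq> b" "a \<noteq> v" "b \<noteq> v" "edges_at f v = {{v,a},{v,b}}"
        using edges_at_form[OF R f v(1)] by blast
      have abf: "a \<in> set f" "b \<in> set f" using ab(4) face_edge_sub(1)[OF R f]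
        by (auto simp: edges_at_def)
      have ga: "vertex_type_55n F a n" "vertex_type_55n F b n"
        using abf ab Bv unfolding Bd_def by blast+
      have "card (faces_at F v) \<noteq> 4"
      proof
        assume "card (faces_at F v) = 4"
        then show False using deg4_excl[OF R L f n7 _ ab(4) ab(1)] ga unfolding n_def by blast
      qed
      then have d5: "card (faces_at F v) \<ge> 5" using badt(2)[OF v] by simp
      have "K / real (card (faces_at F v)) \<le> K / 5"
        using d5 Kpos by (intro divide_left_mono) auto
      then have tv: "t v \<le> K/5 - 3*pi/5" using badt(1)[OF v] by linarith
      have "facial_curvature F f = 6 * gam + t v" using split sumG G6 Bv by simp
      also have "\<dots> \<le> 6 * gam + (K/5 - 3*pi/5)" using tv by simp
      also have "\<dots> = pi * (-9/175)"
        unfolding gam_def K_def interior_angle_def n7' by (simp add: field_simps)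
      also have "\<dots> < 0" using pi_gt_zero by simp
      finally show ?thesis .
    qed
  qed
  show ?thesis
  proof (cases "Bd = {}")
    case True
    then have allg: "\<forall>v\<in>set f. vertex_type_55n F v n" unfolding Bd_def by auto
    have "\<not> (vertex_curvature F v < 0)" if "v \<in> set f" for v
    proof -
      have "2/real n \<ge> 1/5" using nv by auto
      then have "pi * (2/n - 1/5) \<ge> 0" using pi_gt_zero by simp
      then show ?thesis using goodcurv[OF that] allg that by simp
    qed
    then show ?thesis using allg unfolding n_def by auto
  next
    case False
    then show ?thesis using main by auto
  qed
qed


end
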